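(* Let $p$ be a prime and $a,b,c\ge0$ integers with $a,b<p$ and $c\le a+b$. (1) If $c\ge b$, then $f(a,b,c)=t^{c-b}f(b,a,a+b-c)$. (2) If $a+b-(p-1)\le c\le p-1\le a+b$, then $$f(a,b,c)=(-1)^{a+c}(t-1)^{a+b-(p-1)}\,f\big(c-(a+b)+(p-1),\ (p-1)-c,\ (p-1)-b\big).$$
   Context: For non-negative integers $a,b,c$, $f(a,b,c)\in\overline{\mathbb{F}}_p[t]$ is $f(a,b,c)=\sum_{i_2+i_3=c}\binom{a}{i_2}\binom{b}{i_3}t^{i_2}$ (binomial coefficients reduced mod $p$, $\binom{n}{i}=0$ for $i<0$ or $i>n$). *)

theory Defs
  imports Main "HOL-Computational_Algebra.Polynomial"
begin

definition fpoly :: "nat \<Rightarrow> nat \<Rightarrow> nat \<Rightarrow> 'a::comm_ring_1 poly" where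
  "fpoly a b c = (\<Sum>i\<le>c. monom (of_nat ((a choose i) * (b choose (c - i)))) i)"

end

theory Submission
  imports Defs
begin


lemma coeff_fpoly: "coeff (fpoly a b c :: 'a::comm_ring_1 poly) i =
   (if i \<le> c then of_nat ((a choose i) * (b choose (c - i))) else 0)"
  by (simp add: fpoly_def coeff_sum coeff_monom)

lemma choose_step: "Suc j * (n choose Suc j) = (n - j) * (n choose j)"
  by (metis binomial_absorption binomial_absorb_comp)

lemma R1: "(fpoly (Suc a) b (Suc c) :: 'a::comm_ring_1 poly) = fpoly a b (Suc c) + [:0,1:] * fpoly a b c"
proof (rule poly_eqI)
  fix i
  show "coeff (fpoly (Suc a) b (Suc c) :: 'a poly) i = coeff (fpoly a b (Suc c) + [:0,1:] * fpoly a b c) i"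
    by (cases i) (auto simp: coeff_fpoly mult_pCons_left algebra_simps Suc_diff_le simp flip: of_nat_add of_nat_mult)
qed

lemma R2: "(fpoly a (Suc b) (Suc c) :: 'a::comm_ring_1 poly) = fpoly a b (Suc c) + fpoly a b c"
proof (rule poly_eqI)
  fix i
  show "coeff (fpoly a (Suc b) (Suc c) :: 'a poly) i = coeff (fpoly a b (Suc c) + fpoly a b c) i"
  proof (cases i)
    case 0 then show ?thesis by (simp add: coeff_fpoly algebra_simps flip: of_nat_add of_nat_mult)
  next
    case (Suc i')
    show ?thesis
    proof (cases "i' < c")
      case True
      then have e: "Suc c - i = Suc (c - Suc i')" "c - i' = Suc (c - Suc i')" using Suc by auto
      show ?thesis using True Suc by (simp add: coeff_fpoly e algebra_simps flip: of_nat_add of_nat_mult)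
    next
      case False
      then show ?thesis using Suc by (auto simp: coeff_fpoly algebra_simps Suc_diff_le simp flip: of_nat_add of_nat_mult)
    qed
  qed
qed

lemma cong_choose:
  fixes k n :: nat
  assumes "CHAR('a::field) = p" "prime p" "k + n + 1 = p" "j < p"
  shows "(of_nat (n choose j) :: 'a) = (-1)^j * of_nat ((k + j) choose j)"
  using assms(4)
proof (induction j)
  case 0 then show ?case by simp
next
  case (Suc j)
  have "\<not> p dvd Suc j" using Suc.prems by (auto dest: dvd_imp_le)
  then have nz: "(of_nat (Suc j) :: 'a) \<noteq> 0"
    using assms(1) by (metis of_nat_eq_0_iff_char_dvd)
  have IH: "(of_nat (n choose j) :: 'a) = (-1)^j * of_nat ((k + j) choose j)" using Suc by simp
  have key: "(of_nat (n - j) :: 'a) * of_nat (n choose j) = - of_nat (k + j + 1) * of_nat (n choose j)"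
  proof (cases "j \<le> n")
    case True
    have "(of_nat (n - j) :: 'a) + of_nat (k + j + 1) = of_nat p"
    proof -
      have "n - j + (k + j + 1) = p" using True assms(3) by simp
      then show ?thesis by (metis of_nat_add)
    qed
    also have "\<dots> = 0" using assms(1) by (metis of_nat_CHAR)
    finally have h: "(of_nat (n - j) :: 'a) + of_nat (k + j + 1) = 0" .
    then have "(of_nat (n - j) :: 'a) = - of_nat (k + j + 1)" by (metis eq_neg_iff_add_eq_0)
    then show ?thesis by simp
  next
    case False then show ?thesis by (simp add: binomial_eq_0)
  qed
  have "of_nat (Suc j) * (of_nat (n choose Suc j) :: 'a) = of_nat (n - j) * of_nat (n choose j)"
    by (metis choose_step of_nat_mult)
  also have "\<dots> = - of_nat (k + j + 1) * ((-1)^j * of_nat ((k + j) choose j))" using key IH by simp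
  also have "\<dots> = of_nat (Suc j) * ((-1)^Suc j * of_nat ((k + Suc j) choose Suc j))"
  proof -
    have "(k + j + 1) * ((k + j) choose j) = Suc j * ((k + Suc j) choose Suc j)"
      using Suc_times_binomial[of j "k+j"] by simp
    then have "(of_nat (k + j + 1) :: 'a) * of_nat ((k + j) choose j) = of_nat (Suc j) * of_nat ((k + Suc j) choose Suc j)"
      by (metis of_nat_mult)
    then show ?thesis by (simp add: algebra_simps)
  qed
  finally show ?case using nz by (metis mult_left_cancel)
qed

lemma trinom: "(i + u choose i) * (i + u + v choose v) = (i + v choose i) * (i + v + u choose u)"
proof -
  have s1: "i + u + v choose v = u + v + i choose (u + i)"
    using binomial_symmetric[of v "u+v+i"] by (simp add: ac_simps)
  have s2: "i + v + u choose u = v + u + i choose (v + i)"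
    using binomial_symmetric[of u "v+u+i"] by (simp add: ac_simps)
  have s3: "u + v choose u = v + u choose v"
    using binomial_symmetric[of u "u+v"] by (simp add: ac_simps)
  show ?thesis
    using choose_mult_lemma[of u v i] choose_mult_lemma[of v u i] s1 s2 s3
    by (simp add: ac_simps)
qed

lemma neg1_pow_poly: "((-1)::'a::comm_ring_1 poly)^n = [:(-1)^n:]"
  by (induction n) (simp_all add: mult_pCons_left)

lemma base:
  assumes "CHAR('a::field) = p" "prime p" "a + b = p - 1" "c \<le> p - 1"
  shows "(fpoly a b c :: 'a poly) = (-1)^(a+c) * fpoly c (p - 1 - c) a"
proof (rule poly_eqI)
  fix i
  have p1: "p > 1" using assms(2) prime_gt_1_nat by blast
  show "coeff (fpoly a b c :: 'a poly) i = coeff ((-1)^(a+c) * fpoly c (p - 1 - c) a) i"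
  proof (cases "i \<le> c \<and> i \<le> a")
    case False
    then show ?thesis by (auto simp: neg1_pow_poly mult_pCons_left coeff_fpoly binomial_eq_0)
  next
    case True
    define u where "u = a - i"
    define v where "v = c - i"
    have a: "a = i + u" and c: "c = i + v" using True u_def v_def by auto
    have c1: "(of_nat (b choose v) :: 'a) = (-1)^v * of_nat ((a + v) choose v)"
      by (rule cong_choose[OF assms(1,2)]) (use assms p1 c in auto)
    have c2: "(of_nat ((p - 1 - c) choose u) :: 'a) = (-1)^u * of_nat ((c + u) choose u)"
      by (rule cong_choose[OF assms(1,2)]) (use assms p1 a c in auto)
    have sg: "(-1::'a)^(a+c) * (-1)^u = (-1)^v"
    proof -
      have "a + c + u = v + 2 * (i + u)" using a c by simp
      then have "(-1::'a)^(a+c+u) = (-1)^v" by (simp add: power_add power_mult)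
      then show ?thesis by (simp add: power_add)
    qed
    have tri: "(a choose i) * ((a + v) choose v) = (c choose i) * ((c + u) choose u)"
      using trinom[of i u v] a c by (simp add: ac_simps)
    have "coeff (fpoly a b c :: 'a poly) i = of_nat (a choose i) * of_nat (b choose v)"
      using True by (simp add: coeff_fpoly v_def)
    also have "\<dots> = (-1)^v * of_nat ((a choose i) * ((a + v) choose v))" by (simp add: c1)
    also have "\<dots> = (-1)^(a+c) * (-1)^u * of_nat ((c choose i) * ((c + u) choose u))" by (simp add: tri sg)
    also have "\<dots> = (-1)^(a+c) * (of_nat (c choose i) * of_nat ((p - 1 - c) choose u))" using c2 by simp
    also have "\<dots> = coeff ((-1)^(a+c) * fpoly c (p - 1 - c) a) i"
      using True by (simp add: neg1_pow_poly mult_pCons_left coeff_fpoly u_def)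
    finally show ?thesis .
  qed
qed

lemma alg_step:
  fixes s T X F0 F1 :: "'b::comm_ring_1"
  assumes "T = X - 1"
  shows "- s * T^N * (F1 + X * F0) + s * T^N * (F1 + F0) = - s * T ^ Suc N * F0"
  unfolding assms by (simp add: algebra_simps)

lemma ind:
  assumes "CHAR('a::field) = p" "prime p"
  shows "a + b = (p - 1) + N \<Longrightarrow> a < p \<Longrightarrow> b < p \<Longrightarrow> N \<le> c \<Longrightarrow> c \<le> p - 1 \<Longrightarrow>
    (fpoly a b c :: 'a poly) = (-1)^(a+c) * [:-1,1:]^N * fpoly (c + (p - 1) - (a + b)) ((p - 1) - c) ((p - 1) - b)"
proof (induction N arbitrary: b c)
  case 0
  then have e1: "c + (p - 1) - (a + b) = c" and e2: "p - 1 - b = a" by auto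
  show ?case unfolding e1 e2 using base[OF assms, of a b c] 0 by simp
next
  case (Suc N)
  obtain b' where b: "b = Suc b'" using Suc.prems by (cases b) auto
  obtain c' where c: "c = Suc c'" using Suc.prems by (cases c) auto
  define \<alpha> where "\<alpha> = c' - N"
  define \<beta> where "\<beta> = p - 1 - Suc c'"
  define \<gamma> where "\<gamma> = p - 1 - Suc b'"
  define T :: "'a poly" where "T = [:-1,1:]"
  define s :: "'a poly" where "s = (-1)^(a + c')"
  have IH1: "(fpoly a b' (Suc c') :: 'a poly) = - s * T^N * fpoly (Suc \<alpha>) \<beta> (Suc \<gamma>)"
  proof -
    have h: "(fpoly a b' (Suc c') :: 'a poly) = (-1)^(a + Suc c') * T^N * fpoly (Suc c' + (p - 1) - (a + b')) ((p - 1) - Suc c') ((p - 1) - b')"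
      unfolding T_def by (rule Suc.IH) (use Suc.prems b c in auto)
    have e: "Suc c' + (p - 1) - (a + b') = Suc \<alpha>" "(p - 1) - b' = Suc \<gamma>"
      using Suc.prems b c unfolding \<alpha>_def \<gamma>_def by auto
    show ?thesis using h unfolding e s_def \<beta>_def by simp
  qed
  have IH2: "(fpoly a b' c' :: 'a poly) = s * T^N * fpoly \<alpha> (Suc \<beta>) (Suc \<gamma>)"
  proof -
    have h: "(fpoly a b' c' :: 'a poly) = (-1)^(a + c') * T^N * fpoly (c' + (p - 1) - (a + b')) ((p - 1) - c') ((p - 1) - b')"
      unfolding T_def by (rule Suc.IH) (use Suc.prems b c in auto)
    have e: "c' + (p - 1) - (a + b') = \<alpha>" "(p - 1) - b' = Suc \<gamma>" "(p - 1) - c' = Suc \<beta>"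
      using Suc.prems b c unfolding \<alpha>_def \<gamma>_def \<beta>_def by auto
    show ?thesis using h unfolding e s_def by simp
  qed
  have TX: "T = [:0,1:] - 1" unfolding T_def by (simp add: poly_eq_iff coeff_pCons split: nat.split)
  have "(fpoly a b c :: 'a poly) = fpoly a b' (Suc c') + fpoly a b' c'" unfolding b c by (rule R2)
  also have "\<dots> = - s * T^N * (fpoly \<alpha> \<beta> (Suc \<gamma>) + [:0,1:] * fpoly \<alpha> \<beta> \<gamma>)
      + s * T^N * (fpoly \<alpha> \<beta> (Suc \<gamma>) + fpoly \<alpha> \<beta> \<gamma>)"
    unfolding IH1 IH2 R1 R2 ..
  also have "\<dots> = - s * T ^ Suc N * fpoly \<alpha> \<beta> \<gamma>" by (rule alg_step[OF TX])
  also have "\<dots> = (-1)^(a+c) * [:-1,1:]^Suc N * fpoly (c + (p - 1) - (a + b)) ((p - 1) - c) ((p - 1) - b)"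
  proof -
    have e: "c + (p - 1) - (a + b) = \<alpha>" "(p - 1) - c = \<beta>" "(p - 1) - b = \<gamma>"
      using Suc.prems b c unfolding \<alpha>_def \<gamma>_def \<beta>_def by auto
    show ?thesis unfolding e using c by (simp add: s_def T_def)
  qed
  finally show ?case .
qed

lemma part1:
  assumes "b \<le> c" "c \<le> a + b"
  shows "(fpoly a b c :: 'a::comm_ring_1 poly) = monom 1 (c - b) * fpoly b a (a + b - c)"
proof (rule poly_eqI)
  fix n
  show "coeff (fpoly a b c :: 'a poly) n = coeff (monom 1 (c - b) * fpoly b a (a + b - c)) n"
  proof (cases "c - b \<le> n \<and> n \<le> c \<and> n \<le> a")
    case True
    define j where "j = n - (c - b)"
    have j1: "j \<le> a + b - c" "b - j = c - n" "a + b - c - j = a - n" "j \<le> b"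
      using True assms unfolding j_def by auto
    have "b choose j = b choose (c - n)" using binomial_symmetric[OF j1(4)] j1(2) by simp
    moreover have "a choose (a - n) = a choose n" using binomial_symmetric[of n a] True by simp
    ultimately show ?thesis using True j1 by (simp add: coeff_fpoly coeff_monom_mult j_def[symmetric] mult.commute)
  next
    case False
    then show ?thesis using assms by (auto simp: coeff_fpoly coeff_monom_mult binomial_eq_0)
  qed
qed



theorem lemmaA4:
  fixes p a b c :: nat
  assumes "prime p" and "CHAR('a::field) = p"
    and "a < p" and "b < p" and "c \<le> a + b"
  shows "(b \<le> c \<longrightarrow>
           (fpoly a b c :: 'a poly) = monom 1 (c - b) * fpoly b a (a + b - c))
       \<and> (a + b - (p - 1) \<le> c \<and> c \<le> p - 1 \<and> p - 1 \<le> a + b \<longrightarrow>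
           (fpoly a b c :: 'a poly) =
             (-1) ^ (a + c) * [:-1, 1:] ^ (a + b - (p - 1))
             * fpoly (c + (p - 1) - (a + b)) ((p - 1) - c) ((p - 1) - b))"
proof (intro conjI impI)
  assume "b \<le> c"
  then show "(fpoly a b c :: 'a poly) = monom 1 (c - b) * fpoly b a (a + b - c)"
    using part1 assms(5) by blast
next
  assume h: "a + b - (p - 1) \<le> c \<and> c \<le> p - 1 \<and> p - 1 \<le> a + b"
  then have "a + b = (p - 1) + (a + b - (p - 1))" by simp
  from ind[OF assms(2,1) this assms(3,4)] h
  show "(fpoly a b c :: 'a poly) = (-1) ^ (a + c) * [:-1, 1:] ^ (a + b - (p - 1))
             * fpoly (c + (p - 1) - (a + b)) ((p - 1) - c) ((p - 1) - b)" by blast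
qed

end
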